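(* Let $X$ be a totally disconnected compact metrizable space, $T\colon X\to X$ a homeomorphism, $K$ a field with involution, $\mathcal A=C_K(X)\rtimes_T\mathbb Z$, $E\subseteq X$ a nonempty clopen set and $\mathcal P$ a partition of $X\setminus E$. Let $\mathcal B$ be the unital $*$-subalgebra of $\mathcal A$ generated by $\{\chi_Zt: Z\in\mathcal P\}$ and $\mathcal B_0=C_K(X)\cap\mathcal B$. Then $\mathcal B_0$ is the linear span of $1$ and the projections $$\chi_{T^{-r}(Z_{-r})\cap T^{-r+1}(Z_{-r+1})\cap\cdots\cap Z_0\cap T(Z_1)\cap\cdots\cap T^{s-1}(Z_{s-1})}$$ with $r,s\ge0$ and $Z_{-r},\dots,Z_{s-1}\in\mathcal P$.
   Context: $C_K(X)$ is the $*$-algebra of locally constant functions $X\to K$ (pointwise operations, $f^*=\bar f$), $\chi_U$ the characteristic function of a clopen $U$. $\mathcal A=C_K(X)\rtimes_T\mathbb Z$ is the algebraic crossed product: finite sums $\sum_if_it^i$ with $f_i\in C_K(X)$, multiplication determined by $tf=(f\circ T^{-1})t$ (so $t\chi_Ut^{-1}=\chi_{T(U)}$), involution $(ft^i)^*=t^{-i}f^*$, and $t^{-1}=t^*$. A partition of a clopen set $Y$ is a finite family of nonempty, pairwise disjoint clopen subsets with union $Y$. *)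

theory Defs
  imports "HOL-Analysis.Analysis"
begin

definition totally_disconnected_space :: "'x::topological_space itself \<Rightarrow> bool" where
  "totally_disconnected_space _ \<longleftrightarrow> (\<forall>S::'x set. connected S \<longrightarrow> (\<exists>a. S \<subseteq> {a}))"

definition clopen :: "'x::topological_space set \<Rightarrow> bool" where
  "clopen U \<longleftrightarrow> open U \<and> closed U"

text \<open>Locally constant functions X -> K (the elements of C_K(X)).\<close>
definition locally_constant :: "('x::topological_space \<Rightarrow> 'k) \<Rightarrow> bool" where
  "locally_constant f \<longleftrightarrow> (\<forall>x. \<exists>U. open U \<and> x \<in> U \<and> (\<forall>y\<in>U. f y = f x))"

definition field_involution :: "('k::field \<Rightarrow> 'k) \<Rightarrow> bool" where
  "field_involution cj \<longleftrightarrow> (\<forall>a b. cj (a + b) = cj a + cj b) \<and> (\<forall>a b. cj (a * b) = cj a * cj b)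
     \<and> (\<forall>a. cj (cj a) = a)"

definition clopen_partition :: "'x::topological_space set set \<Rightarrow> 'x set \<Rightarrow> bool" where
  "clopen_partition P Y \<longleftrightarrow> finite P \<and> (\<forall>Z\<in>P. Z \<noteq> {} \<and> clopen Z)
     \<and> (\<forall>Z1\<in>P. \<forall>Z2\<in>P. Z1 \<noteq> Z2 \<longrightarrow> Z1 \<inter> Z2 = {}) \<and> \<Union>P = Y"

definition Tpow :: "('x \<Rightarrow> 'x) \<Rightarrow> ('x \<Rightarrow> 'x) \<Rightarrow> int \<Rightarrow> 'x \<Rightarrow> 'x" where
  "Tpow T Ti i = (if 0 \<le> i then T ^^ nat i else Ti ^^ nat (- i))"

text \<open>Elements of the algebraic crossed product C_K(X) \<rtimes>_T Z are represented by their
  coefficient functions: a represents \<Sum>_n (a n) t^n.\<close>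
definition crossed :: "(int \<Rightarrow> 'x::topological_space \<Rightarrow> 'k::field) set" where
  "crossed = {a. finite {n. a n \<noteq> (\<lambda>_. 0)} \<and> (\<forall>n. locally_constant (a n))}"

text \<open>(f t^i)(g t^j) = f (g \<circ> T^{-i}) t^{i+j}\<close>
definition cp_mult :: "('x \<Rightarrow> 'x) \<Rightarrow> ('x \<Rightarrow> 'x) \<Rightarrow> (int \<Rightarrow> 'x \<Rightarrow> 'k::field)
    \<Rightarrow> (int \<Rightarrow> 'x \<Rightarrow> 'k) \<Rightarrow> (int \<Rightarrow> 'x \<Rightarrow> 'k)" where
  "cp_mult T Ti a b = (\<lambda>n x. \<Sum>i\<in>{i. a i \<noteq> (\<lambda>_. 0)}. a i x * b (n - i) (Tpow T Ti (- i) x))"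

definition cp_add :: "(int \<Rightarrow> 'x \<Rightarrow> 'k::field) \<Rightarrow> (int \<Rightarrow> 'x \<Rightarrow> 'k) \<Rightarrow> (int \<Rightarrow> 'x \<Rightarrow> 'k)" where
  "cp_add a b = (\<lambda>n x. a n x + b n x)"

definition cp_scale :: "'k::field \<Rightarrow> (int \<Rightarrow> 'x \<Rightarrow> 'k) \<Rightarrow> (int \<Rightarrow> 'x \<Rightarrow> 'k)" where
  "cp_scale c a = (\<lambda>n x. c * a n x)"

text \<open>(f t^i)^* = t^{-i} conj(f) = (conj(f) \<circ> T^i) t^{-i}\<close>
definition cp_star :: "('x \<Rightarrow> 'x) \<Rightarrow> ('x \<Rightarrow> 'x) \<Rightarrow> ('k::field \<Rightarrow> 'k) \<Rightarrow> (int \<Rightarrow> 'x \<Rightarrow> 'k)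
    \<Rightarrow> (int \<Rightarrow> 'x \<Rightarrow> 'k)" where
  "cp_star T Ti cj a = (\<lambda>n x. cj (a (- n) (Tpow T Ti (- n) x)))"

definition cp_embed :: "('x \<Rightarrow> 'k::field) \<Rightarrow> (int \<Rightarrow> 'x \<Rightarrow> 'k)" where
  "cp_embed f = (\<lambda>n. if n = 0 then f else (\<lambda>_. 0))"

definition cp_one :: "int \<Rightarrow> 'x \<Rightarrow> 'k::field" where
  "cp_one = cp_embed (\<lambda>_. 1)"

definition chi_t :: "'x set \<Rightarrow> (int \<Rightarrow> 'x \<Rightarrow> 'k::field)" where
  "chi_t Z = (\<lambda>n. if n = 1 then indicator Z else (\<lambda>_. 0))"

inductive_set star_subalg_gen :: "('x \<Rightarrow> 'x) \<Rightarrow> ('x \<Rightarrow> 'x) \<Rightarrow> ('k::field \<Rightarrow> 'k)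
    \<Rightarrow> (int \<Rightarrow> 'x \<Rightarrow> 'k) set \<Rightarrow> (int \<Rightarrow> 'x \<Rightarrow> 'k) set"
  for T Ti cj S where
    gen_one: "cp_one \<in> star_subalg_gen T Ti cj S"
  | gen_base: "s \<in> S \<Longrightarrow> s \<in> star_subalg_gen T Ti cj S"
  | gen_add: "a \<in> star_subalg_gen T Ti cj S \<Longrightarrow> b \<in> star_subalg_gen T Ti cj S
      \<Longrightarrow> cp_add a b \<in> star_subalg_gen T Ti cj S"
  | gen_scale: "a \<in> star_subalg_gen T Ti cj S \<Longrightarrow> cp_scale c a \<in> star_subalg_gen T Ti cj S"
  | gen_mult: "a \<in> star_subalg_gen T Ti cj S \<Longrightarrow> b \<in> star_subalg_gen T Ti cj S
      \<Longrightarrow> cp_mult T Ti a b \<in> star_subalg_gen T Ti cj S"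
  | gen_star: "a \<in> star_subalg_gen T Ti cj S \<Longrightarrow> cp_star T Ti cj a \<in> star_subalg_gen T Ti cj S"

definition kspan :: "(int \<Rightarrow> 'x \<Rightarrow> 'k::field) set \<Rightarrow> (int \<Rightarrow> 'x \<Rightarrow> 'k) set" where
  "kspan S = {(\<lambda>n x. \<Sum>v\<in>F. c v * v n x) | F c. finite F \<and> F \<subseteq> S}"

end

theory Submission
  imports Defs
begin

lemma Tpow_0[simp]: "Tpow T Ti 0 = id"
  by (simp add: Tpow_def fun_eq_iff)

locale tp =
  fixes T Ti :: "'x \<Rightarrow> 'x"
  assumes inv1: "\<And>x. T (Ti x) = x" and inv2: "\<And>x. Ti (T x) = x"
begin

abbreviation "TP \<equiv> Tpow T Ti"

lemma Tpow_plus1: "TP (i+1) x = T (TP i x)"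
proof (cases "0 \<le> i")
  case True
  then have "nat (i+1) = Suc (nat i)" by simp
  then show ?thesis using True by (simp add: Tpow_def)
next
  case False
  have m: "nat (-i) = Suc (nat (-(i+1)))" using False by simp
  show ?thesis
  proof (cases "i = -1")
    case True then show ?thesis by (simp add: Tpow_def inv1)
  next
    case F2: False
    with False have "\<not> 0 \<le> i+1" by simp
    then show ?thesis using False m by (simp add: Tpow_def inv1)
  qed
qed

lemma Tpow_minus1: "TP (i-1) x = Ti (TP i x)"
  using Tpow_plus1[of "i-1" x] inv2 by simp

lemma Tpow_add: "TP (i+j) x = TP i (TP j x)"
proof (induction i rule: int_induct[where k=0])
  case base then show ?case by simp
next
  case (step1 i)
  have "TP (i+1+j) x = TP ((i+j)+1) x" by (simp add: ac_simps)
  also have "\<dots> = T (TP (i+j) x)" by (rule Tpow_plus1)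
  finally show ?case using step1 Tpow_plus1 by simp
next
  case (step2 i)
  have "TP (i-1+j) x = TP ((i+j)-1) x" by (rule arg_cong[of _ _ "\<lambda>k. TP k x"]) simp
  also have "\<dots> = Ti (TP (i+j) x)" by (rule Tpow_minus1)
  finally show ?case using step2 Tpow_minus1 by simp
qed

lemma Tpow_inv: "TP i (TP (-i) x) = x"
  using Tpow_add[of i "-i" x] by simp

lemma Tpow_image: "TP i ` A = TP (-i) -` A"
proof
  show "TP i ` A \<subseteq> TP (- i) -` A"
    using Tpow_inv[of "-i"] by auto
  show "TP (- i) -` A \<subseteq> TP i ` A"
  proof
    fix y assume "y \<in> TP (- i) -` A"
    then show "y \<in> TP i ` A"
      using Tpow_inv[of i y] by (metis imageI vimageD)
  qed
qed

lemma Tpow_inj: "TP i x = TP i y \<Longrightarrow> x = y"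
  by (metis Tpow_inv minus_minus)

end

lemma Tpow_cont:
  assumes "continuous_on UNIV T" "continuous_on UNIV Ti"
  shows "continuous_on UNIV (Tpow T Ti i)"
proof -
  have "continuous_on UNIV (f ^^ n)" if "continuous_on UNIV f" for f :: "'a::topological_space \<Rightarrow> 'a" and n
  proof (induction n)
    case 0 then show ?case by (simp add: continuous_on_id)
  next
    case (Suc n)
    have "continuous_on (range f) (f^^n)" using Suc continuous_on_subset by blast
    from continuous_on_compose[OF that this] show ?case by (simp only: funpow_Suc_right)
  qed
  then show ?thesis using assms by (simp add: Tpow_def)
qed


lemma cj_props:
  assumes "field_involution cj"
  shows "cj 0 = 0" "cj 1 = 1" "cj (a + b) = cj a + cj b" "cj (a * b) = cj a * cj b"
proof -
  have add: "\<And>a b. cj (a + b) = cj a + cj b" and mul: "\<And>a b. cj (a * b) = cj a * cj b"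
    and inv: "\<And>a. cj (cj a) = a" using assms by (auto simp: field_involution_def)
  show "cj 0 = 0" using add[of 0 0] by (metis add.right_neutral add_left_cancel)
  then have z: "cj 0 = 0" .
  have "cj 1 \<noteq> 0"
  proof
    assume h: "cj 1 = 0"
    have "cj (cj 1) = 0" using mul[of "cj 1" 1] h by simp
    then show False using inv[of 1] by simp
  qed
  moreover have "cj 1 = cj 1 * cj 1" using mul[of 1 1] by simp
  ultimately show "cj 1 = 1" by (metis mult_cancel_left2)
  show "cj (a + b) = cj a + cj b" "cj (a * b) = cj a * cj b" using add mul by auto
qed

inductive_set fsp :: "('x \<Rightarrow> 'k::field) set \<Rightarrow> ('x \<Rightarrow> 'k) set" for G where
  fsp_zero: "(\<lambda>_. 0) \<in> fsp G"
| fsp_base: "g \<in> G \<Longrightarrow> g \<in> fsp G"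
| fsp_add: "f \<in> fsp G \<Longrightarrow> g \<in> fsp G \<Longrightarrow> (\<lambda>x. f x + g x) \<in> fsp G"
| fsp_scale: "f \<in> fsp G \<Longrightarrow> (\<lambda>x. c * f x) \<in> fsp G"

lemma fsp_sum: "finite I \<Longrightarrow> (\<And>i. i \<in> I \<Longrightarrow> f i \<in> fsp G) \<Longrightarrow> (\<lambda>x. \<Sum>i\<in>I. f i x) \<in> fsp G"
proof (induction I rule: finite_induct)
  case empty then show ?case by (simp add: fsp_zero)
next
  case (insert i I)
  then show ?case using fsp_add[of "f i" G "\<lambda>x. \<Sum>i\<in>I. f i x"] by simp
qed

lemma fsp_mult:
  assumes "f \<in> fsp G" "h \<in> fsp H"
    and "\<And>g k. g \<in> G \<Longrightarrow> k \<in> H \<Longrightarrow> (\<lambda>x. g x * k (\<phi> x)) \<in> fsp K"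
  shows "(\<lambda>x. f x * h (\<phi> x)) \<in> fsp K"
  using assms(1)
proof (induction f rule: fsp.induct)
  case fsp_zero then show ?case by (simp add: fsp.fsp_zero)
next
  case (fsp_base g)
  show ?case using assms(2)
  proof (induction h rule: fsp.induct)
    case fsp_zero then show ?case by (simp add: fsp.fsp_zero)
  next
    case (fsp_base k) then show ?case using assms(3) \<open>g \<in> G\<close> by blast
  next
    case (fsp_add f1 f2) then show ?case using fsp.fsp_add by (fastforce simp: distrib_left)
  next
    case (fsp_scale f1 c)
    then have "(\<lambda>x. c * (g x * f1 (\<phi> x))) \<in> fsp K" using fsp.fsp_scale by blast
    then show ?case by (simp add: ac_simps)
  qed
next
  case (fsp_add f1 f2) then show ?case using fsp.fsp_add by (fastforce simp: distrib_right)
next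
  case (fsp_scale f1 c)
  then have "(\<lambda>x. c * (f1 x * h (\<phi> x))) \<in> fsp K" using fsp.fsp_scale by blast
  then show ?case by (simp add: ac_simps)
qed

lemma fsp_map:
  assumes "f \<in> fsp G" "\<And>g. g \<in> G \<Longrightarrow> (\<lambda>x. cj (g (\<phi> x))) \<in> fsp H" "field_involution cj"
  shows "(\<lambda>x. cj (f (\<phi> x))) \<in> fsp H"
  using assms(1)
proof (induction f rule: fsp.induct)
  case fsp_zero then show ?case by (simp add: cj_props[OF assms(3)] fsp.fsp_zero)
next
  case (fsp_base g) then show ?case using assms(2) by blast
next
  case (fsp_add f1 f2) then show ?case using fsp.fsp_add by (fastforce simp: cj_props[OF assms(3)])
next
  case (fsp_scale f1 c) then show ?case using fsp.fsp_scale by (fastforce simp: cj_props[OF assms(3)])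
qed

definition cpm :: "int \<Rightarrow> 'x set \<Rightarrow> int \<Rightarrow> 'x \<Rightarrow> 'k::field" where
  "cpm n S = (\<lambda>m. if m = n then indicator S else (\<lambda>_. 0))"

lemma indicator_zero_iff: "(indicator S = (\<lambda>_. 0::'k::zero_neq_one)) \<longleftrightarrow> S = {}"
  by (auto simp: fun_eq_iff indicator_def)

lemma supp_cpm: "{m. (cpm n S :: int \<Rightarrow> 'x \<Rightarrow> 'k::field) m \<noteq> (\<lambda>_. 0)} = (if S = {} then {} else {n})"
  by (auto simp: cpm_def indicator_zero_iff)

context tp
begin

lemma cp_mult_eq:
  assumes "finite I" "{k. a k \<noteq> (\<lambda>_. 0)} \<subseteq> I"
  shows "cp_mult T Ti a b n x = (\<Sum>k\<in>I. a k x * b (n-k) (TP (-k) x))"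
  unfolding cp_mult_def
  by (rule sum.mono_neutral_left) (use assms in \<open>auto intro: finite_subset\<close>)

lemma cpm_mult_pt:
  "cp_mult T Ti (cpm i A) (cpm j B) n x = (cpm (i+j) (A \<inter> TP i ` B) :: int \<Rightarrow> 'x \<Rightarrow> 'k::field) n x"
proof (cases "A = {}")
  case True
  have "cp_mult T Ti (cpm i A) (cpm j B) n x = (\<Sum>k\<in>{}. (cpm i A k x :: 'k) * cpm j B (n-k) (TP (-k) x))"
    by (rule cp_mult_eq) (use True in \<open>auto simp: cpm_def\<close>)
  then show ?thesis using True by (simp add: cpm_def)
next
  case False
  have "cp_mult T Ti (cpm i A) (cpm j B) n x = (\<Sum>k\<in>{i}. (cpm i A k x :: 'k) * cpm j B (n-k) (TP (-k) x))"
    by (rule cp_mult_eq) (auto simp: cpm_def)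
  also have "\<dots> = (cpm i A i x :: 'k) * cpm j B (n-i) (TP (-i) x)"
    by simp
  also have "\<dots> = indicator A x * (cpm j B (n-i) (TP (-i) x) :: 'k)"
    by (simp add: cpm_def)
  also have "\<dots> = (cpm (i+j) (A \<inter> TP i ` B) :: int \<Rightarrow> 'x \<Rightarrow> 'k::field) n x"
  proof (cases "n = i + j")
    case True
    have "indicator A x * indicator B (TP (-i) x) = (indicator (A \<inter> TP i ` B) x :: 'k)"
      unfolding Tpow_image indicator_inter_arith indicator_vimage[symmetric] by simp
    then show ?thesis using True by (simp add: cpm_def)
  next
    case False
    then show ?thesis by (simp add: cpm_def)
  qed
  finally show ?thesis .
qed

lemma cpm_mult: "cp_mult T Ti (cpm i A) (cpm j B) = (cpm (i+j) (A \<inter> TP i ` B) :: int \<Rightarrow> 'x \<Rightarrow> 'k::field)"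
  using cpm_mult_pt by blast

lemma cpm_star: "field_involution cj \<Longrightarrow> cp_star T Ti cj (cpm i A) = (cpm (-i) (TP (-i) ` A) :: int \<Rightarrow> 'x \<Rightarrow> 'k::field)"
proof (intro ext)
  fix n x assume cj: "field_involution cj"
  have ci: "cj (indicator S y) = (indicator S y :: 'k)" for S y
    by (simp add: indicator_def cj_props[OF cj])
  show "cp_star T Ti cj (cpm i A) n x = (cpm (-i) (TP (-i) ` A) :: int \<Rightarrow> 'x \<Rightarrow> 'k::field) n x"
  proof (cases "n = -i")
    case True
    then show ?thesis unfolding cp_star_def cpm_def Tpow_image by (simp add: ci indicator_vimage)
  next
    case False
    then show ?thesis unfolding cp_star_def cpm_def by (auto simp: cj_props[OF cj])
  qed
qed

end


definition Fam :: "('x \<Rightarrow> 'x) \<Rightarrow> ('x \<Rightarrow> 'x) \<Rightarrow> 'x set set \<Rightarrow> int \<Rightarrow> 'x set set" where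
  "Fam T Ti P n = {\<Inter>k\<in>{a..b}. Tpow T Ti k ` Z k | a b Z.
     (\<forall>k\<in>{a..b}. Z k \<in> P) \<and> a \<le> 0 \<and> a \<le> n \<and> 0 \<le> b + 1 \<and> n \<le> b + 1}"

context tp
begin

lemma INT_mem: "x \<in> (\<Inter>k\<in>I. TP k ` Z k) \<longleftrightarrow> (\<forall>k\<in>I. TP (-k) x \<in> Z k)"
  by (simp add: Tpow_image)

lemma TP_comp: "TP (-k) (TP (-i) x) = TP (-(k+i)) x"
  using Tpow_add[of "-k" "-i" x] by simp

lemma Fam_mult:
  assumes disj: "\<And>Z1 Z2. Z1 \<in> P \<Longrightarrow> Z2 \<in> P \<Longrightarrow> Z1 \<noteq> Z2 \<Longrightarrow> Z1 \<inter> Z2 = {}"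
    and SF: "S \<in> Fam T Ti P i" and SF': "S' \<in> Fam T Ti P j"
  shows "S \<inter> TP i ` S' = {} \<or> S \<inter> TP i ` S' \<in> Fam T Ti P (i+j)"
proof -
  obtain a b Z where S: "S = (\<Inter>k\<in>{a..b}. TP k ` Z k)" and Z: "\<forall>k\<in>{a..b}. Z k \<in> P"
    and ab: "a \<le> 0" "a \<le> i" "0 \<le> b+1" "i \<le> b+1" using SF unfolding Fam_def by blast
  obtain a' b' Z' where S': "S' = (\<Inter>k\<in>{a'..b'}. TP k ` Z' k)" and Z': "\<forall>k\<in>{a'..b'}. Z' k \<in> P"
    and ab': "a' \<le> 0" "a' \<le> j" "0 \<le> b'+1" "j \<le> b'+1" using SF' unfolding Fam_def by blast
  have mem: "x \<in> S \<inter> TP i ` S' \<longleftrightarrow> (\<forall>k\<in>{a..b}. TP (-k) x \<in> Z k) \<and> (\<forall>k\<in>{a'..b'}. TP (-(k+i)) x \<in> Z' k)" for x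
  proof -
    have "x \<in> TP i ` S' \<longleftrightarrow> TP (-i) x \<in> S'" by (simp add: Tpow_image)
    also have "\<dots> \<longleftrightarrow> (\<forall>k\<in>{a'..b'}. TP (-(k+i)) x \<in> Z' k)" by (simp only: S' INT_mem TP_comp)
    finally have h: "x \<in> TP i ` S' \<longleftrightarrow> (\<forall>k\<in>{a'..b'}. TP (-(k+i)) x \<in> Z' k)" .
    have h2: "x \<in> S \<longleftrightarrow> (\<forall>k\<in>{a..b}. TP (-k) x \<in> Z k)" unfolding S by (rule INT_mem)
    show ?thesis by (simp only: Int_iff h h2)
  qed
  show ?thesis
  proof (cases "\<exists>k. a \<le> k \<and> k \<le> b \<and> a' \<le> k - i \<and> k - i \<le> b' \<and> Z k \<noteq> Z' (k-i)")
    case True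
    then obtain k where k: "a \<le> k" "k \<le> b" "a' \<le> k - i" "k - i \<le> b'" "Z k \<noteq> Z' (k-i)" by blast
    have "S \<inter> TP i ` S' = {}"
    proof (rule ccontr)
      assume "S \<inter> TP i ` S' \<noteq> {}"
      then obtain x where "x \<in> S \<inter> TP i ` S'" by blast
      then have L: "(\<forall>k\<in>{a..b}. TP (-k) x \<in> Z k) \<and> (\<forall>k\<in>{a'..b'}. TP (-(k+i)) x \<in> Z' k)"
        using mem by blast
      then have 1: "TP (-k) x \<in> Z k" using k by auto
      have "k - i \<in> {a'..b'}" using k by auto
      with L have 2: "TP (-((k-i)+i)) x \<in> Z' (k-i)" by blast
      from 2 have "TP (-k) x \<in> Z' (k-i)" by simp
      with 1 have "TP (-k) x \<in> Z k \<inter> Z' (k-i)" by blast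
      moreover have "Z k \<in> P" "Z' (k-i) \<in> P" using Z Z' k by auto
      ultimately show False using disj k(5) by blast
    qed
    then show ?thesis by blast
  next
    case False
    define Z'' where "Z'' k = (if a \<le> k \<and> k \<le> b then Z k else Z' (k-i))" for k
    define a'' where "a'' = min a (a'+i)"
    define b'' where "b'' = max b (b'+i)"
    have cover: "(a \<le> k \<and> k \<le> b) \<or> (a' \<le> k-i \<and> k-i \<le> b')" if "a'' \<le> k" "k \<le> b''" for k
      using that ab ab' unfolding a''_def b''_def by linarith
    have eq: "S \<inter> TP i ` S' = (\<Inter>k\<in>{a''..b''}. TP k ` Z'' k)"
    proof (rule set_eqI)
      fix x
      show "x \<in> S \<inter> TP i ` S' \<longleftrightarrow> x \<in> (\<Inter>k\<in>{a''..b''}. TP k ` Z'' k)"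
        unfolding mem INT_mem
      proof
        assume L: "(\<forall>k\<in>{a..b}. TP (-k) x \<in> Z k) \<and> (\<forall>k\<in>{a'..b'}. TP (-(k+i)) x \<in> Z' k)"
        show "\<forall>k\<in>{a''..b''}. TP (-k) x \<in> Z'' k"
        proof
          fix k assume "k \<in> {a''..b''}"
          then have c: "(a \<le> k \<and> k \<le> b) \<or> (a' \<le> k-i \<and> k-i \<le> b')" using cover by auto
          show "TP (-k) x \<in> Z'' k"
          proof (cases "a \<le> k \<and> k \<le> b")
            case True then show ?thesis using L by (simp add: Z''_def)
          next
            case F: False
            with c have "k - i \<in> {a'..b'}" by auto
            then have "TP (-((k-i)+i)) x \<in> Z' (k-i)" using L by blast
            moreover have "Z'' k = Z' (k-i)" unfolding Z''_def using F by (rule if_not_P)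
            ultimately show ?thesis by simp
          qed
        qed
      next
        assume R: "\<forall>k\<in>{a''..b''}. TP (-k) x \<in> Z'' k"
        show "(\<forall>k\<in>{a..b}. TP (-k) x \<in> Z k) \<and> (\<forall>k\<in>{a'..b'}. TP (-(k+i)) x \<in> Z' k)"
        proof (intro conjI ballI)
          fix k assume k: "k \<in> {a..b}"
          then have "k \<in> {a''..b''}" unfolding a''_def b''_def by auto
          then have "TP (-k) x \<in> Z'' k" using R by blast
          moreover have "Z'' k = Z k" unfolding Z''_def using k by (intro if_P) auto
          ultimately show "TP (-k) x \<in> Z k" by simp
        next
          fix k assume k: "k \<in> {a'..b'}"
          then have "k + i \<in> {a''..b''}" unfolding a''_def b''_def by auto
          then have r: "TP (-(k+i)) x \<in> Z'' (k+i)" using R by blast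
          show "TP (-(k+i)) x \<in> Z' k"
          proof (cases "a \<le> k+i \<and> k+i \<le> b")
            case True
            then have "Z (k+i) = Z' k" using False k by force
            moreover have "Z'' (k+i) = Z (k+i)" unfolding Z''_def using True by (rule if_P)
            ultimately show ?thesis using r by simp
          next
            case F: False
            have "Z'' (k+i) = Z' (k+i-i)" unfolding Z''_def using F by (rule if_not_P)
            then show ?thesis using r by simp
          qed
        qed
      qed
    qed
    have "\<forall>k\<in>{a''..b''}. Z'' k \<in> P"
    proof
      fix k assume "k \<in> {a''..b''}"
      then have "(a \<le> k \<and> k \<le> b) \<or> (a' \<le> k-i \<and> k-i \<le> b')" using cover by auto
      then show "Z'' k \<in> P" using Z Z' by (auto simp: Z''_def)
    qed
    moreover have "a'' \<le> 0" "a'' \<le> i+j" "0 \<le> b''+1" "i+j \<le> b''+1"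
      using ab ab' unfolding a''_def b''_def by auto
    ultimately have "S \<inter> TP i ` S' \<in> Fam T Ti P (i+j)" unfolding Fam_def eq by blast
    then show ?thesis by blast
  qed
qed

lemma Fam_shift:
  assumes "S \<in> Fam T Ti P (-n)"
  shows "TP n ` S \<in> Fam T Ti P n"
proof -
  obtain a b Z where S: "S = (\<Inter>k\<in>{a..b}. TP k ` Z k)" and Z: "\<forall>k\<in>{a..b}. Z k \<in> P"
    and ab: "a \<le> 0" "a \<le> -n" "0 \<le> b+1" "-n \<le> b+1" using assms unfolding Fam_def by blast
  have eq: "TP n ` S = (\<Inter>k\<in>{a+n..b+n}. TP k ` Z (k-n))"
  proof (rule set_eqI)
    fix x
    have "x \<in> TP n ` S \<longleftrightarrow> TP (-n) x \<in> S" by (simp add: Tpow_image)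
    also have "\<dots> \<longleftrightarrow> (\<forall>k\<in>{a..b}. TP (-(k+n)) x \<in> Z k)" by (simp only: S INT_mem TP_comp)
    also have "\<dots> \<longleftrightarrow> (\<forall>k\<in>{a+n..b+n}. TP (-k) x \<in> Z (k-n))"
    proof
      assume L: "\<forall>k\<in>{a..b}. TP (-(k+n)) x \<in> Z k"
      show "\<forall>k\<in>{a+n..b+n}. TP (-k) x \<in> Z (k-n)"
      proof
        fix k assume "k \<in> {a+n..b+n}"
        then have "k - n \<in> {a..b}" by auto
        then show "TP (-k) x \<in> Z (k-n)" using L by fastforce
      qed
    next
      assume R: "\<forall>k\<in>{a+n..b+n}. TP (-k) x \<in> Z (k-n)"
      show "\<forall>k\<in>{a..b}. TP (-(k+n)) x \<in> Z k"
      proof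
        fix k assume "k \<in> {a..b}"
        then have "k + n \<in> {a+n..b+n}" by auto
        then show "TP (-(k+n)) x \<in> Z k" using R by fastforce
      qed
    qed
    finally show "x \<in> TP n ` S \<longleftrightarrow> x \<in> (\<Inter>k\<in>{a+n..b+n}. TP k ` Z (k-n))" unfolding INT_mem .
  qed
  have "\<forall>k\<in>{a+n..b+n}. Z (k-n) \<in> P" using Z by auto
  moreover have "a+n \<le> 0" "a+n \<le> n" "0 \<le> b+n+1" "n \<le> b+n+1" using ab by auto
  ultimately show ?thesis unfolding Fam_def eq mem_Collect_eq
    by (intro exI[of _ "a+n"] exI[of _ "b+n"] exI[of _ "\<lambda>k. Z (k-n)"] conjI refl) auto
qed

end


lemma cp_one_cpm: "cp_one = cpm 0 UNIV"
  by (simp add: cp_one_def cp_embed_def cpm_def fun_eq_iff)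

lemma chi_t_cpm: "chi_t Z = cpm 1 Z"
  by (simp add: chi_t_def cpm_def)

lemma cp_embed_cpm: "cp_embed (indicator S) = cpm 0 S"
  by (simp add: cp_embed_def cpm_def)

context tp
begin

lemma V_mult:
  fixes f h :: "'x \<Rightarrow> 'k::field"
  assumes disj: "\<And>Z1 Z2. Z1 \<in> P \<Longrightarrow> Z2 \<in> P \<Longrightarrow> Z1 \<noteq> Z2 \<Longrightarrow> Z1 \<inter> Z2 = {}"
    and f: "f \<in> fsp (indicator ` Fam T Ti P i)" and h: "h \<in> fsp (indicator ` Fam T Ti P j)"
  shows "(\<lambda>x. f x * h (TP (-i) x)) \<in> fsp ((indicator ` Fam T Ti P (i+j)) :: ('x \<Rightarrow> 'k::field) set)"
proof (rule fsp_mult[OF f h])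
  fix g k :: "'x \<Rightarrow> 'k" assume g: "g \<in> indicator ` Fam T Ti P i" and k: "k \<in> indicator ` Fam T Ti P j"
  then obtain S S' where S: "S \<in> Fam T Ti P i" "g = indicator S" and S': "S' \<in> Fam T Ti P j" "k = indicator S'"
    by blast
  have eq: "(\<lambda>x. g x * k (TP (-i) x)) = (indicator (S \<inter> TP i ` S') :: 'x \<Rightarrow> 'k)"
    unfolding S(2) S'(2) Tpow_image indicator_inter_arith indicator_vimage by simp
  from Fam_mult[OF disj S(1) S'(1)]
  show "(\<lambda>x. g x * k (TP (-i) x)) \<in> fsp ((indicator ` Fam T Ti P (i+j)) :: ('x \<Rightarrow> 'k::field) set)"
  proof
    assume e: "S \<inter> TP i ` S' = {}"
    have "(indicator {} :: 'x \<Rightarrow> 'k) = (\<lambda>_. 0)" by (rule ext) simp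
    then show ?thesis unfolding eq e by (simp add: fsp_zero)
  next
    assume "S \<inter> TP i ` S' \<in> Fam T Ti P (i + j)"
    then show ?thesis unfolding eq by (intro fsp_base) blast
  qed
qed

lemma V_star:
  fixes f :: "'x \<Rightarrow> 'k::field"
  assumes cj: "field_involution cj"
    and f: "f \<in> fsp ((indicator ` Fam T Ti P (-n)) :: ('x \<Rightarrow> 'k::field) set)"
  shows "(\<lambda>x. cj (f (TP (-n) x))) \<in> fsp ((indicator ` Fam T Ti P n) :: ('x \<Rightarrow> 'k) set)"
proof (rule fsp_map[OF f _ cj])
  fix g :: "'x \<Rightarrow> 'k" assume "g \<in> indicator ` Fam T Ti P (-n)"
  then obtain S where S: "S \<in> Fam T Ti P (-n)" "g = indicator S" by blast
  have ci: "cj (indicator S y) = (indicator S y :: 'k)" for y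
    by (simp add: indicator_def cj_props[OF cj])
  have eq: "(\<lambda>x. cj (g (TP (-n) x))) = (indicator (TP n ` S) :: 'x \<Rightarrow> 'k)"
    unfolding S(2) ci Tpow_image indicator_vimage by simp
  show "(\<lambda>x. cj (g (TP (-n) x))) \<in> fsp (indicator ` Fam T Ti P n)"
    unfolding eq using Fam_shift[OF S(1)] by (intro fsp_base) blast
qed

definition Inv :: "'x set set \<Rightarrow> (int \<Rightarrow> 'x \<Rightarrow> 'k::field) \<Rightarrow> bool" where
  "Inv P b \<longleftrightarrow> finite {n. b n \<noteq> (\<lambda>_. 0)} \<and> (\<forall>n. b n \<in> fsp (indicator ` Fam T Ti P n))"

lemma Inv_cpm: "S \<in> Fam T Ti P n \<Longrightarrow> Inv P (cpm n S :: int \<Rightarrow> 'x \<Rightarrow> 'k::field)"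
  unfolding Inv_def
proof (intro conjI allI)
  show "finite {m. (cpm n S :: int \<Rightarrow> 'x \<Rightarrow> 'k) m \<noteq> (\<lambda>_. 0)}"
    by (rule finite_subset[of _ "{n}"]) (auto simp: cpm_def)
  fix m assume "S \<in> Fam T Ti P n"
  then show "(cpm n S :: int \<Rightarrow> 'x \<Rightarrow> 'k) m \<in> fsp (indicator ` Fam T Ti P m)"
    by (cases "m = n") (auto simp: cpm_def intro: fsp_base fsp_zero)
qed

lemma UNIV_Fam0: "UNIV \<in> Fam T Ti P 0"
  unfolding Fam_def mem_Collect_eq
  by (intro exI[of _ "0"] exI[of _ "-1"] exI[of _ "\<lambda>_. UNIV"] conjI) auto

lemma Z_Fam1: "Z \<in> P \<Longrightarrow> Z \<in> Fam T Ti P 1"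
  unfolding Fam_def mem_Collect_eq
  by (intro exI[of _ "0"] exI[of _ "0"] exI[of _ "\<lambda>_. Z"] conjI) auto

lemma Inv_subalg:
  assumes disj: "\<And>Z1 Z2. Z1 \<in> P \<Longrightarrow> Z2 \<in> P \<Longrightarrow> Z1 \<noteq> Z2 \<Longrightarrow> Z1 \<inter> Z2 = {}"
    and cj: "field_involution cj"
    and b: "b \<in> star_subalg_gen T Ti cj (chi_t ` P)"
  shows "Inv P b"
  using b
proof (induction rule: star_subalg_gen.induct)
  case gen_one
  show ?case unfolding cp_one_cpm by (rule Inv_cpm[OF UNIV_Fam0])
next
  case (gen_base s)
  then obtain Z where "Z \<in> P" "s = chi_t Z" by blast
  then show ?case unfolding chi_t_cpm using Inv_cpm[OF Z_Fam1] by blast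
next
  case (gen_add a b)
  then show ?case unfolding Inv_def
  proof (intro conjI allI)
    show "finite {n. cp_add a b n \<noteq> (\<lambda>_. 0)}"
      by (rule finite_subset[of _ "{n. a n \<noteq> (\<lambda>_. 0)} \<union> {n. b n \<noteq> (\<lambda>_. 0)}"])
         (use gen_add in \<open>auto simp: Inv_def cp_add_def fun_eq_iff\<close>)
    fix n show "cp_add a b n \<in> fsp (indicator ` Fam T Ti P n)"
      using gen_add unfolding Inv_def cp_add_def by (auto intro: fsp_add)
  qed
next
  case (gen_scale a c)
  then show ?case unfolding Inv_def
  proof (intro conjI allI)
    show "finite {n. cp_scale c a n \<noteq> (\<lambda>_. 0)}"
      by (rule finite_subset[of _ "{n. a n \<noteq> (\<lambda>_. 0)}"])
         (use gen_scale in \<open>auto simp: Inv_def cp_scale_def fun_eq_iff\<close>)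
    fix n show "cp_scale c a n \<in> fsp (indicator ` Fam T Ti P n)"
      using gen_scale unfolding Inv_def cp_scale_def by (auto intro: fsp_scale)
  qed
next
  case (gen_mult a b)
  define Sa where "Sa = {n. a n \<noteq> (\<lambda>_. 0)}"
  define Sb where "Sb = {n. b n \<noteq> (\<lambda>_. 0)}"
  have fa: "finite Sa" and fb: "finite Sb" using gen_mult unfolding Inv_def Sa_def Sb_def by auto
  have Va: "a n \<in> fsp (indicator ` Fam T Ti P n)" and Vb: "b n \<in> fsp (indicator ` Fam T Ti P n)" for n
    using gen_mult unfolding Inv_def by auto
  have eq: "cp_mult T Ti a b n = (\<lambda>x. \<Sum>k\<in>Sa. a k x * b (n-k) (TP (-k) x))" for n
    unfolding cp_mult_def Sa_def ..
  show ?case unfolding Inv_def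
  proof (intro conjI allI)
    show "finite {n. cp_mult T Ti a b n \<noteq> (\<lambda>_. 0)}"
    proof (rule finite_subset[of _ "(\<lambda>(p,q). p+q) ` (Sa \<times> Sb)"])
      show "finite ((\<lambda>(p,q). p+q) ` (Sa \<times> Sb))" using fa fb by auto
      show "{n. cp_mult T Ti a b n \<noteq> (\<lambda>_. 0)} \<subseteq> (\<lambda>(p,q). p+q) ` (Sa \<times> Sb)"
      proof
        fix n assume n: "n \<in> {n. cp_mult T Ti a b n \<noteq> (\<lambda>_. 0)}"
        show "n \<in> (\<lambda>(p,q). p+q) ` (Sa \<times> Sb)"
        proof (rule ccontr)
          assume nn: "n \<notin> (\<lambda>(p,q). p+q) ` (Sa \<times> Sb)"
          have "b (n-k) = (\<lambda>_. 0)" if "k \<in> Sa" for k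
          proof (rule ccontr)
            assume "b (n-k) \<noteq> (\<lambda>_. 0)"
            then have "(k, n-k) \<in> Sa \<times> Sb" using that Sb_def by auto
            then have "n \<in> (\<lambda>(p,q). p+q) ` (Sa \<times> Sb)" by force
            then show False using nn by blast
          qed
          then have "cp_mult T Ti a b n = (\<lambda>_. 0)" unfolding eq by (simp add: fun_eq_iff)
          then show False using n by blast
        qed
      qed
    qed
    fix n
    show "cp_mult T Ti a b n \<in> fsp (indicator ` Fam T Ti P n)"
      unfolding eq
    proof (rule fsp_sum[OF fa])
      fix k assume "k \<in> Sa"
      from V_mult[OF disj Va[of k] Vb[of "n-k"]]
      show "(\<lambda>x. a k x * b (n-k) (TP (-k) x)) \<in> fsp (indicator ` Fam T Ti P n)" by simp
    qed
  qed
next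
  case (gen_star a)
  define Sa where "Sa = {n. a n \<noteq> (\<lambda>_. 0)}"
  have fa: "finite Sa" using gen_star unfolding Inv_def Sa_def by auto
  have Va: "a n \<in> fsp (indicator ` Fam T Ti P n)" for n
    using gen_star unfolding Inv_def by auto
  have eq: "cp_star T Ti cj a n = (\<lambda>x. cj (a (-n) (TP (-n) x)))" for n
    unfolding cp_star_def ..
  show ?case unfolding Inv_def
  proof (intro conjI allI)
    show "finite {n. cp_star T Ti cj a n \<noteq> (\<lambda>_. 0)}"
    proof (rule finite_subset[of _ "uminus ` Sa"])
      show "finite (uminus ` Sa)" using fa by auto
      show "{n. cp_star T Ti cj a n \<noteq> (\<lambda>_. 0)} \<subseteq> uminus ` Sa"
      proof
        fix n assume n: "n \<in> {n. cp_star T Ti cj a n \<noteq> (\<lambda>_. 0)}"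
        have "a (-n) \<noteq> (\<lambda>_. 0)"
        proof
          assume "a (-n) = (\<lambda>_. 0)"
          then have "cp_star T Ti cj a n = (\<lambda>_. 0)" unfolding eq by (simp add: cj_props[OF cj])
          then show False using n by blast
        qed
        then have "-n \<in> Sa" unfolding Sa_def by simp
        then show "n \<in> uminus ` Sa" by force
      qed
    qed
    fix n
    show "cp_star T Ti cj a n \<in> fsp (indicator ` Fam T Ti P n)"
      unfolding eq by (rule V_star[OF cj Va])
  qed
qed

end


context tp
begin

lemma pos_in:
  assumes "\<forall>i\<in>{0..int s - 1}. Z i \<in> P"
  shows "(cpm (int s) (\<Inter>i\<in>{0..int s - 1}. TP i ` Z i) :: int \<Rightarrow> 'x \<Rightarrow> 'k::field)
           \<in> star_subalg_gen T Ti cj (chi_t ` P)"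
  using assms
proof (induction s)
  case 0
  show ?case using star_subalg_gen.gen_one[of T Ti cj "chi_t ` P"] by (simp add: cp_one_cpm)
next
  case (Suc s)
  define A where "A = (\<Inter>i\<in>{0..int s - 1}. TP i ` Z i)"
  have "\<forall>i\<in>{0..int s - 1}. Z i \<in> P" using Suc.prems by auto
  then have A: "(cpm (int s) A :: int \<Rightarrow> 'x \<Rightarrow> 'k) \<in> star_subalg_gen T Ti cj (chi_t ` P)"
    using Suc.IH A_def by simp
  have Zs: "chi_t (Z (int s)) \<in> star_subalg_gen T Ti cj (chi_t ` P)"
    by (rule star_subalg_gen.gen_base) (use Suc.prems in auto)
  have "cp_mult T Ti (cpm (int s) A :: int \<Rightarrow> 'x \<Rightarrow> 'k) (chi_t (Z (int s))) \<in> star_subalg_gen T Ti cj (chi_t ` P)"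
    by (rule star_subalg_gen.gen_mult[OF A Zs])
  moreover have "cp_mult T Ti (cpm (int s) A :: int \<Rightarrow> 'x \<Rightarrow> 'k) (chi_t (Z (int s)))
      = cpm (int s + 1) (A \<inter> TP (int s) ` Z (int s))"
    by (simp add: chi_t_cpm cpm_mult)
  moreover have "{0..int (Suc s) - 1} = insert (int s) {0..int s - 1}" by auto
  then have "A \<inter> TP (int s) ` Z (int s) = (\<Inter>i\<in>{0..int (Suc s) - 1}. TP i ` Z i)"
    unfolding A_def by auto
  ultimately show ?case by (simp add: ac_simps)
qed

lemma neg_in:
  assumes cj: "field_involution cj" and "\<forall>i\<in>{-int r..-1}. Z i \<in> P"
  shows "(cpm (-int r) (\<Inter>i\<in>{-int r..-1}. TP i ` Z i) :: int \<Rightarrow> 'x \<Rightarrow> 'k::field)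
           \<in> star_subalg_gen T Ti cj (chi_t ` P)"
  using assms(2)
proof (induction r)
  case 0
  show ?case using star_subalg_gen.gen_one[of T Ti cj "chi_t ` P"] by (simp add: cp_one_cpm)
next
  case (Suc r)
  define B where "B = (\<Inter>i\<in>{-int r..-1}. TP i ` Z i)"
  define Z' where "Z' = Z (-int r - 1)"
  have "\<forall>i\<in>{-int r..-1}. Z i \<in> P" using Suc.prems by auto
  then have B: "(cpm (-int r) B :: int \<Rightarrow> 'x \<Rightarrow> 'k) \<in> star_subalg_gen T Ti cj (chi_t ` P)"
    using Suc.IH B_def by simp
  have Zs: "chi_t Z' \<in> star_subalg_gen T Ti cj (chi_t ` P)"
    by (rule star_subalg_gen.gen_base) (use Suc.prems in \<open>auto simp: Z'_def\<close>)
  have "cp_mult T Ti (cpm (-int r) B :: int \<Rightarrow> 'x \<Rightarrow> 'k) (cp_star T Ti cj (chi_t Z')) \<in> star_subalg_gen T Ti cj (chi_t ` P)"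
    by (rule star_subalg_gen.gen_mult[OF B star_subalg_gen.gen_star[OF Zs]])
  moreover have "cp_mult T Ti (cpm (-int r) B :: int \<Rightarrow> 'x \<Rightarrow> 'k) (cp_star T Ti cj (chi_t Z'))
      = cpm (-int r + -1) (B \<inter> TP (-int r) ` TP (-1) ` Z')"
    by (simp add: chi_t_cpm cpm_mult cpm_star[OF cj])
  moreover have "TP (-int r) ` TP (-1) ` Z' = TP (-int r - 1) ` Z'"
    unfolding image_image using Tpow_add[of "-int r" "-1"] by simp
  moreover have "{-int (Suc r)..-1} = insert (-int r - 1) {-int r..-1}" by auto
  then have "B \<inter> TP (-int r - 1) ` Z' = (\<Inter>i\<in>{-int (Suc r)..-1}. TP i ` Z i)"
    unfolding B_def Z'_def by auto
  moreover have "-int (Suc r) = -int r + -1" by simp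
  ultimately show ?case by (simp only:)
qed

lemma proj_in:
  assumes cj: "field_involution cj"
    and "(cpm n A :: int \<Rightarrow> 'x \<Rightarrow> 'k::field) \<in> star_subalg_gen T Ti cj S0"
  shows "(cpm 0 A :: int \<Rightarrow> 'x \<Rightarrow> 'k::field) \<in> star_subalg_gen T Ti cj S0"
proof -
  have "cp_mult T Ti (cpm n A :: int \<Rightarrow> 'x \<Rightarrow> 'k) (cp_star T Ti cj (cpm n A)) \<in> star_subalg_gen T Ti cj S0"
    by (rule star_subalg_gen.gen_mult[OF assms(2) star_subalg_gen.gen_star[OF assms(2)]])
  moreover have "TP n ` TP (-n) ` A = A"
    unfolding image_image Tpow_inv by simp
  ultimately show ?thesis by (simp add: cpm_mult cpm_star[OF cj])
qed

lemma gen_in: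
  assumes cj: "field_involution cj" and Z: "\<forall>i\<in>{-int r..int s - 1}. Z i \<in> P"
  shows "(cpm 0 (\<Inter>i\<in>{-int r..int s - 1}. TP i ` Z i) :: int \<Rightarrow> 'x \<Rightarrow> 'k::field)
           \<in> star_subalg_gen T Ti cj (chi_t ` P)"
proof -
  define A where "A = (\<Inter>i\<in>{0..int s - 1}. TP i ` Z i)"
  define B where "B = (\<Inter>i\<in>{-int r..-1}. TP i ` Z i)"
  have "(cpm (int s) A :: int \<Rightarrow> 'x \<Rightarrow> 'k) \<in> star_subalg_gen T Ti cj (chi_t ` P)"
    unfolding A_def by (rule pos_in) (use Z in auto)
  then have A: "(cpm 0 A :: int \<Rightarrow> 'x \<Rightarrow> 'k) \<in> star_subalg_gen T Ti cj (chi_t ` P)"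
    by (rule proj_in[OF cj])
  have "(cpm (-int r) B :: int \<Rightarrow> 'x \<Rightarrow> 'k) \<in> star_subalg_gen T Ti cj (chi_t ` P)"
    unfolding B_def by (rule neg_in[OF cj]) (use Z in auto)
  then have B: "(cpm 0 B :: int \<Rightarrow> 'x \<Rightarrow> 'k) \<in> star_subalg_gen T Ti cj (chi_t ` P)"
    by (rule proj_in[OF cj])
  have "cp_mult T Ti (cpm 0 B :: int \<Rightarrow> 'x \<Rightarrow> 'k) (cpm 0 A) \<in> star_subalg_gen T Ti cj (chi_t ` P)"
    by (rule star_subalg_gen.gen_mult[OF B A])
  moreover have "{-int r..int s - 1} = {-int r..-1} \<union> {0..int s - 1}" by auto
  then have "B \<inter> A = (\<Inter>i\<in>{-int r..int s - 1}. TP i ` Z i)"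
    unfolding A_def B_def by auto
  ultimately show ?thesis by (simp add: cpm_mult)
qed

end


lemma kspan_zero: "(\<lambda>n x. 0) \<in> kspan S"
  unfolding kspan_def by (rule CollectI, rule exI[of _ "{}"]) auto

lemma kspan_base: "v \<in> S \<Longrightarrow> v \<in> kspan S"
  unfolding kspan_def by (rule CollectI, rule exI[of _ "{v}"], rule exI[of _ "\<lambda>_. 1"]) auto

lemma kspan_add:
  assumes "u \<in> kspan S" "w \<in> kspan S"
  shows "(\<lambda>n x. u n x + w n x) \<in> kspan S"
proof -
  obtain F1 c1 where u: "u = (\<lambda>n x. \<Sum>v\<in>F1. c1 v * v n x)" and F1: "finite F1" "F1 \<subseteq> S"
    using assms(1) unfolding kspan_def by blast
  obtain F2 c2 where w: "w = (\<lambda>n x. \<Sum>v\<in>F2. c2 v * v n x)" and F2: "finite F2" "F2 \<subseteq> S"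
    using assms(2) unfolding kspan_def by blast
  define c where "c v = (if v \<in> F1 then c1 v else 0) + (if v \<in> F2 then c2 v else 0)" for v
  have fin: "finite (F1 \<union> F2)" using F1 F2 by auto
  have "(\<Sum>v\<in>F1 \<union> F2. c v * v n x) = u n x + w n x" for n x
  proof -
    have "(\<Sum>v\<in>F1 \<union> F2. c v * v n x)
        = (\<Sum>v\<in>F1 \<union> F2. if v \<in> F1 then c1 v * v n x else 0) + (\<Sum>v\<in>F1 \<union> F2. if v \<in> F2 then c2 v * v n x else 0)"
      unfolding c_def sum.distrib[symmetric] by (rule sum.cong) (auto simp: distrib_right)
    moreover have "\<dots> = (\<Sum>v\<in>(F1 \<union> F2) \<inter> F1. c1 v * v n x) + (\<Sum>v\<in>(F1 \<union> F2) \<inter> F2. c2 v * v n x)"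
      using sum.inter_restrict[OF fin, of "\<lambda>v. c1 v * v n x" F1, symmetric]
        sum.inter_restrict[OF fin, of "\<lambda>v. c2 v * v n x" F2, symmetric] by simp
    moreover have "(F1 \<union> F2) \<inter> F1 = F1" "(F1 \<union> F2) \<inter> F2 = F2" by auto
    ultimately show ?thesis unfolding u w by simp
  qed
  then have "(\<lambda>n x. u n x + w n x) = (\<lambda>n x. \<Sum>v\<in>F1 \<union> F2. c v * v n x)" by simp
  then show ?thesis unfolding kspan_def using fin F1 F2 by blast
qed

lemma kspan_scale:
  assumes "u \<in> kspan S"
  shows "(\<lambda>n x. a * u n x) \<in> kspan S"
proof -
  obtain F1 c1 where u: "u = (\<lambda>n x. \<Sum>v\<in>F1. c1 v * v n x)" and F1: "finite F1" "F1 \<subseteq> S"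
    using assms(1) unfolding kspan_def by blast
  have eq: "(\<lambda>n x. a * u n x) = (\<lambda>n x. \<Sum>v\<in>F1. (a * c1 v) * v n x)"
    unfolding u by (simp add: sum_distrib_left mult.assoc)
  show ?thesis unfolding kspan_def mem_Collect_eq
    by (intro exI[of _ F1] exI[of _ "\<lambda>v. a * c1 v"] conjI eq F1)
qed

lemma lc_const: "locally_constant (\<lambda>_. c)"
  unfolding locally_constant_def by (intro allI exI[of _ UNIV]) auto

lemma lc_comb:
  assumes "locally_constant f" "locally_constant g"
  shows "locally_constant (\<lambda>x. c * f x + g x)"
  unfolding locally_constant_def
proof
  fix x
  obtain U where U: "open U" "x \<in> U" "\<forall>y\<in>U. f y = f x" using assms(1) unfolding locally_constant_def by blast
  obtain V where V: "open V" "x \<in> V" "\<forall>y\<in>V. g y = g x" using assms(2) unfolding locally_constant_def by blast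
  show "\<exists>W. open W \<and> x \<in> W \<and> (\<forall>y\<in>W. c * f y + g y = c * f x + g x)"
  proof (intro exI[of _ "U \<inter> V"] conjI)
    show "open (U \<inter> V)" using U(1) V(1) by (rule open_Int)
    show "x \<in> U \<inter> V" using U(2) V(2) by blast
    show "\<forall>y\<in>U \<inter> V. c * f y + g y = c * f x + g x"
    proof
      fix y assume "y \<in> U \<inter> V"
      then have "f y = f x" "g y = g x" using U(3) V(3) by blast+
      then show "c * f y + g y = c * f x + g x" by simp
    qed
  qed
qed

lemma lc_ind:
  assumes "open S" "closed S"
  shows "locally_constant (indicator S)"
  unfolding locally_constant_def
proof
  fix x
  show "\<exists>U. open U \<and> x \<in> U \<and> (\<forall>y\<in>U. indicator S y = indicator S x)"
  proof (cases "x \<in> S")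
    case True then show ?thesis using assms by (intro exI[of _ S]) auto
  next
    case False then show ?thesis using assms by (intro exI[of _ "- S"]) (auto simp: open_Compl)
  qed
qed

lemma Fam0_gen:
  assumes "S \<in> Fam T Ti P 0"
  shows "\<exists>(r::nat) (s::nat) Z. S = (\<Inter>i\<in>{- int r .. int s - 1}. Tpow T Ti i ` Z i) \<and> (\<forall>i\<in>{- int r .. int s - 1}. Z i \<in> P)"
proof -
  obtain a b Z where S: "S = (\<Inter>k\<in>{a..b}. Tpow T Ti k ` Z k)" and Z: "\<forall>k\<in>{a..b}. Z k \<in> P"
    and ab: "a \<le> 0" "0 \<le> b+1" using assms unfolding Fam_def by blast
  have e: "{- int (nat (-a)) .. int (nat (b+1)) - 1} = {a..b}" using ab by auto
  have "S = (\<Inter>i\<in>{- int (nat (-a)) .. int (nat (b+1)) - 1}. Tpow T Ti i ` Z i) \<and>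
      (\<forall>i\<in>{- int (nat (-a)) .. int (nat (b+1)) - 1}. Z i \<in> P)"
    unfolding e using S Z by blast
  then show ?thesis by blast
qed

lemma emb_span:
  fixes f :: "'x::topological_space \<Rightarrow> 'k::field"
  assumes "f \<in> fsp (indicator ` Fam T Ti P 0)"
  shows "cp_embed f \<in> kspan ({cp_one} \<union>
        {cp_embed (indicator (\<Inter>i\<in>{- int r .. int s - 1}. Tpow T Ti i ` Z i))
          | (r::nat) (s::nat) Z. \<forall>i\<in>{- int r .. int s - 1}. Z i \<in> P})"
  using assms
proof (induction f rule: fsp.induct)
  case fsp_zero
  have e: "cp_embed (\<lambda>_. 0::'k) = (\<lambda>n (x::'x). 0)" by (simp add: cp_embed_def fun_eq_iff)
  show ?case unfolding e by (rule kspan_zero)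
next
  case (fsp_base g)
  then obtain S where "S \<in> Fam T Ti P 0" "g = indicator S" by blast
  then show ?case using Fam0_gen[of S T Ti P] by (intro kspan_base) blast
next
  case (fsp_add f g)
  have "cp_embed (\<lambda>x. f x + g x) = (\<lambda>n x. cp_embed f n x + cp_embed g n x)"
    by (simp add: cp_embed_def fun_eq_iff)
  then show ?case using kspan_add[OF fsp_add.IH] by simp
next
  case (fsp_scale f c)
  have "cp_embed (\<lambda>x. c * f x) = (\<lambda>n x. c * cp_embed f n x)"
    by (simp add: cp_embed_def fun_eq_iff)
  then show ?case using kspan_scale[OF fsp_scale.IH] by simp
qed

lemma span_sub:
  assumes G: "\<And>g. g \<in> G \<Longrightarrow> g \<in> star_subalg_gen T Ti cj S0 \<and> (\<exists>h. locally_constant h \<and> g = cp_embed h)"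
    and "finite F" "F \<subseteq> G"
  shows "(\<lambda>n (x::'x::topological_space). \<Sum>v\<in>F. c v * v n x :: 'k::field) \<in> star_subalg_gen T Ti cj S0 \<and>
     (\<exists>f. locally_constant f \<and> (\<lambda>n x. \<Sum>v\<in>F. c v * v n x) = cp_embed f)"
  using assms(2,3)
proof (induction F rule: finite_induct)
  case empty
  have "cp_scale 0 cp_one \<in> star_subalg_gen T Ti cj S0"
    by (intro star_subalg_gen.gen_scale star_subalg_gen.gen_one)
  moreover have "cp_scale 0 cp_one = (\<lambda>n (x::'x). 0::'k)" by (simp add: cp_scale_def)
  moreover have "cp_embed (\<lambda>_. 0::'k) = (\<lambda>n (x::'x). 0)" by (simp add: cp_embed_def fun_eq_iff)
  then have "\<exists>f. locally_constant f \<and> (\<lambda>n (x::'x). 0::'k) = cp_embed f"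
    using lc_const[of "0::'k"] by metis
  ultimately show ?case by simp
next
  case (insert v F)
  then have IH: "(\<lambda>n x. \<Sum>v\<in>F. c v * v n x) \<in> star_subalg_gen T Ti cj S0"
    "\<exists>f. locally_constant f \<and> (\<lambda>n x. \<Sum>v\<in>F. c v * v n x) = cp_embed f" by auto
  from IH(2) obtain f where f: "locally_constant f" "(\<lambda>n x. \<Sum>v\<in>F. c v * v n x) = cp_embed f" by blast
  have vG: "v \<in> G" using insert by auto
  from G[OF vG] obtain h where v: "v \<in> star_subalg_gen T Ti cj S0" "locally_constant h" "v = cp_embed h" by blast
  have eq: "(\<lambda>n x. \<Sum>v\<in>insert v F. c v * v n x) = cp_add (cp_scale (c v) v) (\<lambda>n x. \<Sum>v\<in>F. c v * v n x)"
    using insert by (simp add: cp_add_def cp_scale_def)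
  have "cp_add (cp_scale (c v) v) (\<lambda>n x. \<Sum>v\<in>F. c v * v n x) \<in> star_subalg_gen T Ti cj S0"
    by (intro star_subalg_gen.gen_add star_subalg_gen.gen_scale v(1) IH(1))
  moreover have "cp_add (cp_scale (c v) v) (\<lambda>n x. \<Sum>v\<in>F. c v * v n x) = cp_embed (\<lambda>x. c v * h x + f x)"
    unfolding f(2) v(3) by (simp add: cp_add_def cp_scale_def cp_embed_def fun_eq_iff)
  ultimately show ?case unfolding eq using lc_comb[OF v(2) f(1)] by blast
qed


theorem lemma3p4:
  fixes T Ti :: "'x::metric_space \<Rightarrow> 'x"
    and cj :: "'k::field \<Rightarrow> 'k"
    and E :: "'x set" and P :: "'x set set"
  assumes "compact (UNIV :: 'x set)"
    and "totally_disconnected_space TYPE('x)"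
    and "homeomorphism UNIV UNIV T Ti"
    and "field_involution cj"
    and "E \<noteq> {}" and "clopen E"
    and "clopen_partition P (UNIV - E)"
  shows "{b \<in> star_subalg_gen T Ti cj (chi_t ` P). \<exists>f. locally_constant f \<and> b = cp_embed f}
    = kspan ({cp_one} \<union>
        {cp_embed (indicator (\<Inter>i\<in>{- int r .. int s - 1}. Tpow T Ti i ` Z i))
          | (r::nat) (s::nat) Z. \<forall>i\<in>{- int r .. int s - 1}. Z i \<in> P})"
    (is "?L = kspan ?G")
proof -
  have inv1: "\<And>x. T (Ti x) = x" and inv2: "\<And>x. Ti (T x) = x"
    and cT: "continuous_on UNIV T" and cTi: "continuous_on UNIV Ti"
    using assms(3) unfolding homeomorphism_def by auto
  interpret tp T Ti by unfold_locales (rule inv1, rule inv2)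
  have cj: "field_involution cj" by (rule assms(4))
  have Pcl: "\<forall>Z\<in>P. Z \<noteq> {} \<and> clopen Z" and Pd: "\<forall>Z1\<in>P. \<forall>Z2\<in>P. Z1 \<noteq> Z2 \<longrightarrow> Z1 \<inter> Z2 = {}"
    using assms(7) unfolding clopen_partition_def by auto
  have disj: "\<And>Z1 Z2. Z1 \<in> P \<Longrightarrow> Z2 \<in> P \<Longrightarrow> Z1 \<noteq> Z2 \<Longrightarrow> Z1 \<inter> Z2 = {}" using Pd by blast
  have ocl: "open (Tpow T Ti i ` Z) \<and> closed (Tpow T Ti i ` Z)" if "Z \<in> P" for i Z
  proof -
    have cont: "continuous_on UNIV (Tpow T Ti (-i))" by (rule Tpow_cont[OF cT cTi])
    have oZ: "open Z" and cZ: "closed Z" using Pcl that unfolding clopen_def by auto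
    have "open (Tpow T Ti (-i) -` Z)" by (rule open_vimage[OF oZ cont])
    moreover have "open (Tpow T Ti (-i) -` (- Z))" by (rule open_vimage[OF _ cont]) (use cZ in \<open>simp add: open_Compl\<close>)
    then have "closed (Tpow T Ti (-i) -` Z)" unfolding vimage_Compl closed_def by simp
    ultimately show ?thesis unfolding Tpow_image by simp
  qed
  show ?thesis
  proof
    show "?L \<subseteq> kspan ?G"
    proof
      fix b assume "b \<in> ?L"
      then obtain f where b: "b \<in> star_subalg_gen T Ti cj (chi_t ` P)" "b = cp_embed f" by blast
      have "Inv P b" by (rule Inv_subalg[OF disj cj b(1)])
      then have "b 0 \<in> fsp (indicator ` Fam T Ti P 0)" unfolding Inv_def by blast
      moreover have "b 0 = f" using b(2) by (simp add: cp_embed_def)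
      ultimately have "f \<in> fsp (indicator ` Fam T Ti P 0)" by simp
      from emb_span[OF this] show "b \<in> kspan ?G" using b(2) by simp
    qed
    show "kspan ?G \<subseteq> ?L"
    proof
      fix v assume "v \<in> kspan ?G"
      then obtain F c where v: "v = (\<lambda>n x. \<Sum>u\<in>F. c u * u n x)" "finite F" "F \<subseteq> ?G"
        unfolding kspan_def by blast
      have G: "g \<in> star_subalg_gen T Ti cj (chi_t ` P) \<and> (\<exists>h. locally_constant h \<and> g = cp_embed h)"
        if "g \<in> ?G" for g
      proof -
        from that consider "g = cp_one"
          | r s Z where "g = cp_embed (indicator (\<Inter>i\<in>{- int r .. int s - 1}. Tpow T Ti i ` Z i))"
              "\<forall>i\<in>{- int r .. int s - 1}. Z i \<in> P"
          by blast
        then show ?thesis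
        proof cases
          case 1
          have "cp_one \<in> star_subalg_gen T Ti cj (chi_t ` P)" by (rule star_subalg_gen.gen_one)
          moreover have "locally_constant (\<lambda>_::'x. 1::'k)" by (rule lc_const)
          ultimately show ?thesis unfolding 1 cp_one_def by blast
        next
          case (2 r s Z)
          define S where "S = (\<Inter>i\<in>{- int r .. int s - 1}. Tpow T Ti i ` Z i)"
          have "(cpm 0 S :: int \<Rightarrow> 'x \<Rightarrow> 'k) \<in> star_subalg_gen T Ti cj (chi_t ` P)"
            unfolding S_def by (rule gen_in[OF cj 2(2)])
          then have sg: "g \<in> star_subalg_gen T Ti cj (chi_t ` P)"
            by (simp add: 2(1) S_def[symmetric] cp_embed_cpm)
          have "open S" unfolding S_def by (rule open_INT) (use 2(2) ocl in auto)
          moreover have "closed S" unfolding S_def by (rule closed_INT) (use 2(2) ocl in auto)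
          ultimately have "locally_constant (indicator S :: 'x \<Rightarrow> 'k)" by (rule lc_ind)
          then show ?thesis using sg 2(1) S_def by blast
        qed
      qed
      from span_sub[of ?G T Ti cj "chi_t ` P", OF G v(2) v(3)]
      show "v \<in> ?L" unfolding v(1) by blast
    qed
  qed
qed

end
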